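(* Let $A\in\mathbb{C}^{n\times n}$ and let $H$ be a subspace of $\mathbb{C}^n$ invariant under $A$, with $A_{|_H}$ the restriction of $A$ to $H$. For $\lambda\in\mathbb{C}$ let $\alpha_\lambda(\cdot)$ and $\gamma_\lambda(\cdot)$ denote the algebraic and geometric multiplicities of $\lambda$ as an eigenvalue (taken to be $0$ if $\lambda$ is not an eigenvalue). Then for every $\lambda\in\mathbb{C}$, $$\alpha_\lambda(A)\le \alpha_\lambda(A_{|_H})+n-\dim H,\qquad \gamma_\lambda(A)\le\gamma_\lambda(A_{|_H})+n-\dim H.$$ Further, if $\mu$ is a vector norm on $\mathbb{C}^n$ and $|\lambda|>\mu^0_H(A)$, then $\alpha_\lambda(A)\le n-\dim H$ and $\gamma_\lambda(A)\le n-\dim H$.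
   Context: For a vector norm $\mu$ on $\mathbb{C}^n$ and a subspace $H$ invariant under $A$, the partial norm is $\mu^0_H(A)=\sup_{0\ne x\in H}\mu(Ax)/\mu(x)$. *)

theory Defs
  imports "Jordan_Normal_Form.Jordan_Normal_Form_Uniqueness"
begin

abbreviation cvs :: "nat \<Rightarrow> (complex, complex vec) module" where
  "cvs n \<equiv> module_vec TYPE(complex) n"

definition is_subspace :: "nat \<Rightarrow> complex vec set \<Rightarrow> bool" where
  "is_subspace n H \<longleftrightarrow> subspace class_ring H (cvs n)"

definition subspace_dim :: "nat \<Rightarrow> complex vec set \<Rightarrow> nat" where
  "subspace_dim n H = vectorspace.dim class_ring ((cvs n)\<lparr>carrier := H\<rparr>)"

definition invariant_under :: "complex mat \<Rightarrow> complex vec set \<Rightarrow> bool" where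
  "invariant_under A H \<longleftrightarrow> (\<forall>v\<in>H. A *\<^sub>v v \<in> H)"

definition basis_mat :: "nat \<Rightarrow> complex vec set \<Rightarrow> complex mat \<Rightarrow> nat \<Rightarrow> bool" where
  "basis_mat n H V d \<longleftrightarrow> V \<in> carrier_mat n d \<and> distinct (cols V) \<and>
     module.lin_indpt class_ring (cvs n) (set (cols V)) \<and>
     module.span class_ring (cvs n) (set (cols V)) = H"

text \<open>The matrix of the restriction A|_H with respect to some basis of H
  (well defined up to similarity): A V = V B where the columns of V form a basis of H.\<close>
definition restr_mat :: "complex mat \<Rightarrow> complex vec set \<Rightarrow> complex mat" where
  "restr_mat A H = (SOME B. \<exists>V d. basis_mat (dim_row A) H V d \<and> B \<in> carrier_mat d d \<and> A * V = V * B)"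

definition alg_mult :: "complex mat \<Rightarrow> complex \<Rightarrow> nat" where
  "alg_mult A l = Polynomial.order l (char_poly A)"

definition geom_mult :: "complex mat \<Rightarrow> complex \<Rightarrow> nat" where
  "geom_mult A l = kernel_dim (A - l \<cdot>\<^sub>m 1\<^sub>m (dim_row A))"

definition is_vec_norm :: "nat \<Rightarrow> (complex vec \<Rightarrow> real) \<Rightarrow> bool" where
  "is_vec_norm n \<mu> \<longleftrightarrow>
     (\<forall>x\<in>carrier_vec n. 0 \<le> \<mu> x \<and> (\<mu> x = 0 \<longleftrightarrow> x = 0\<^sub>v n)) \<and>
     (\<forall>x\<in>carrier_vec n. \<forall>c. \<mu> (c \<cdot>\<^sub>v x) = cmod c * \<mu> x) \<and>
     (\<forall>x\<in>carrier_vec n. \<forall>y\<in>carrier_vec n. \<mu> (x + y) \<le> \<mu> x + \<mu> y)"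

definition partial_norm :: "(complex vec \<Rightarrow> real) \<Rightarrow> complex vec set \<Rightarrow> complex mat \<Rightarrow> real" where
  "partial_norm \<mu> H A = Sup {\<mu> (A *\<^sub>v x) / \<mu> x | x. x \<in> H \<and> x \<noteq> 0\<^sub>v (dim_vec x)}"

end

theory Submission imports Defs "Jordan_Normal_Form.DL_Rank" begin

definition s1 :: "complex vec \<Rightarrow> real" where "s1 x = (\<Sum>i<dim_vec x. cmod (x $ i))"

lemma s1_nonneg: "0 \<le> s1 x" unfolding s1_def by (simp add: sum_nonneg)

lemma complex_BW:
  fixes f :: "nat \<Rightarrow> complex"
  assumes b: "\<And>j. cmod (f j) \<le> B"
  shows "\<exists>r. strict_mono r \<and> convergent (f \<circ> r)"
proof -
  obtain r1 where r1: "strict_mono r1" "monoseq (\<lambda>n. Re (f (r1 n)))" using seq_monosub[of "\<lambda>n. Re (f n)"] by auto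
  have "Bseq (\<lambda>n. Re (f (r1 n)))"
    by (rule BseqI'[of _ B]) (metis b abs_Re_le_cmod order_trans real_norm_def)
  with r1 have c1: "convergent (\<lambda>n. Re (f (r1 n)))" using Bseq_monoseq_convergent by blast
  obtain r2 where r2: "strict_mono r2" "monoseq (\<lambda>n. Im (f (r1 (r2 n))))" using seq_monosub[of "\<lambda>n. Im (f (r1 n))"] by auto
  have "Bseq (\<lambda>n. Im (f (r1 (r2 n))))"
    by (rule BseqI'[of _ B]) (metis b abs_Im_le_cmod order_trans real_norm_def)
  with r2 have c2: "convergent (\<lambda>n. Im (f (r1 (r2 n))))" using Bseq_monoseq_convergent by blast
  from convergent_subseq_convergent[OF c1 r2(1)] have c1': "convergent (\<lambda>n. Re (f (r1 (r2 n))))"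
    by (simp add: o_def)
  from c1' obtain a where a: "(\<lambda>n. Re (f (r1 (r2 n)))) \<longlonglongrightarrow> a" unfolding convergent_def by blast
  from c2 obtain b where bb: "(\<lambda>n. Im (f (r1 (r2 n)))) \<longlonglongrightarrow> b" unfolding convergent_def by blast
  have "(\<lambda>n. f (r1 (r2 n))) \<longlonglongrightarrow> Complex a b"
    unfolding tendsto_complex_iff using a bb by simp
  hence "convergent (f \<circ> (r1 \<circ> r2))" unfolding convergent_def o_def by blast
  moreover have "strict_mono (r1 \<circ> r2)" using r1 r2 strict_mono_o by blast
  ultimately show ?thesis by blast
qed


lemma vn_nonneg: "is_vec_norm n \<mu> \<Longrightarrow> x \<in> carrier_vec n \<Longrightarrow> 0 \<le> \<mu> x"
  unfolding is_vec_norm_def by auto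
lemma vn_zero: "is_vec_norm n \<mu> \<Longrightarrow> x \<in> carrier_vec n \<Longrightarrow> \<mu> x = 0 \<longleftrightarrow> x = 0\<^sub>v n"
  unfolding is_vec_norm_def by auto
lemma vn_smult: "is_vec_norm n \<mu> \<Longrightarrow> x \<in> carrier_vec n \<Longrightarrow> \<mu> (c \<cdot>\<^sub>v x) = cmod c * \<mu> x"
  unfolding is_vec_norm_def by auto
lemma vn_tri: "is_vec_norm n \<mu> \<Longrightarrow> x \<in> carrier_vec n \<Longrightarrow> y \<in> carrier_vec n \<Longrightarrow> \<mu> (x + y) \<le> \<mu> x + \<mu> y"
  unfolding is_vec_norm_def by auto

lemma norm_upper:
  assumes N: "is_vec_norm n \<mu>"
  shows "\<exists>M. \<forall>x\<in>carrier_vec n. \<mu> x \<le> M * s1 x"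
proof -
  define M where "M = (\<Sum>i<n. \<mu> (unit_vec n i))"
  have Mi: "\<mu> (unit_vec n i) \<le> M" if "i < n" for i
    unfolding M_def by (rule member_le_sum, insert that vn_nonneg[OF N], auto)
  define tr where "tr k x = vec n (\<lambda>i. if i < k then x $ i else 0)" for k and x :: "complex vec"
  have main: "k \<le> n \<Longrightarrow> \<mu> (tr k x) \<le> (\<Sum>i<k. cmod (x$i) * \<mu> (unit_vec n i))" for k x
  proof (induction k)
    case 0
    have "tr 0 x = 0\<^sub>v n" unfolding tr_def by (rule eq_vecI, auto)
    then show ?case using vn_zero[OF N, of "0\<^sub>v n"] by simp
  next
    case (Suc k)
    have eq: "tr (Suc k) x = tr k x + (x$k) \<cdot>\<^sub>v unit_vec n k"
      unfolding tr_def using Suc.prems by (intro eq_vecI, auto simp: less_Suc_eq)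
    have "\<mu> (tr (Suc k) x) \<le> \<mu> (tr k x) + \<mu> ((x$k) \<cdot>\<^sub>v unit_vec n k)"
      unfolding eq by (rule vn_tri[OF N], auto simp: tr_def)
    also have "\<mu> ((x$k) \<cdot>\<^sub>v unit_vec n k) = cmod (x$k) * \<mu> (unit_vec n k)"
      by (rule vn_smult[OF N], auto)
    finally show ?case using Suc by simp
  qed
  show ?thesis
  proof (intro exI ballI)
    fix x :: "complex vec" assume x: "x \<in> carrier_vec n"
    have "tr n x = x" unfolding tr_def using x by (intro eq_vecI, auto)
    hence "\<mu> x \<le> (\<Sum>i<n. cmod (x$i) * \<mu> (unit_vec n i))" using main[of n x] by simp
    also have "\<dots> \<le> (\<Sum>i<n. cmod (x$i) * M)"
      by (rule sum_mono, rule mult_left_mono, auto intro: Mi)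
    also have "\<dots> = M * s1 x" unfolding s1_def using x by (simp add: sum_distrib_left mult.commute)
    finally show "\<mu> x \<le> M * s1 x" .
  qed
qed


lemma s1_smult: "s1 (a \<cdot>\<^sub>v v) = cmod a * s1 v"
  unfolding s1_def by (simp add: norm_mult sum_distrib_left)

lemma s1_coord: "i < dim_vec v \<Longrightarrow> cmod (v $ i) \<le> s1 v"
  unfolding s1_def by (rule member_le_sum, auto)

lemma s1_minus_commute: "dim_vec a = dim_vec b \<Longrightarrow> s1 (a - b) = s1 (b - a)"
  unfolding s1_def by (auto intro!: sum.cong simp: norm_minus_commute)

lemma multi_BW:
  fixes y :: "nat \<Rightarrow> complex vec"
  assumes y: "\<And>j. y j \<in> carrier_vec n" and b: "\<And>j. s1 (y j) \<le> 1"
  shows "\<exists>r. strict_mono r \<and> (\<forall>i<n. convergent (\<lambda>j. y (r j) $ i))"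
proof -
  have "k \<le> n \<Longrightarrow> \<exists>r. strict_mono r \<and> (\<forall>i<k. convergent (\<lambda>j. y (r j) $ i))" for k
  proof (induction k)
    case 0
    have "strict_mono (id :: nat \<Rightarrow> nat) \<and> (\<forall>i<(0::nat). convergent (\<lambda>j. y (id j) $ i))"
      by (simp add: strict_mono_def)
    thus ?case by blast
  next
    case (Suc k)
    then obtain r where r: "strict_mono r" "\<forall>i<k. convergent (\<lambda>j. y (r j) $ i)" by auto
    have "cmod (y (r j) $ k) \<le> 1" for j
      using s1_coord[of k "y (r j)"] b[of "r j"] y[of "r j"] Suc.prems by auto
    from complex_BW[of "\<lambda>j. y (r j) $ k", OF this]
    obtain r2 where r2: "strict_mono r2" "convergent ((\<lambda>j. y (r j) $ k) \<circ> r2)" by blast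
    have "strict_mono (r \<circ> r2)" using r r2 strict_mono_o by blast
    moreover have "\<forall>i<Suc k. convergent (\<lambda>j. y ((r \<circ> r2) j) $ i)"
    proof (intro allI impI)
      fix i assume "i < Suc k"
      then consider "i < k" | "i = k" by linarith
      then show "convergent (\<lambda>j. y ((r \<circ> r2) j) $ i)"
      proof cases
        case 1
        with r have "convergent (\<lambda>j. y (r j) $ i)" by auto
        from convergent_subseq_convergent[OF this r2(1)] show ?thesis by (simp add: o_def)
      next
        case 2
        with r2(2) show ?thesis by (simp add: o_def)
      qed
    qed
    ultimately show ?case by blast
  qed
  from this[of n] show ?thesis by simp
qed

lemma norm_lower:
  assumes N: "is_vec_norm n \<mu>"
  shows "\<exists>c>0. \<forall>x\<in>carrier_vec n. c * s1 x \<le> \<mu> x"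
proof (rule ccontr)
  assume neg: "\<not> ?thesis"
  have "\<exists>x\<in>carrier_vec n. \<mu> x < inverse (real (Suc j)) * s1 x" for j
  proof -
    have "inverse (real (Suc j)) > 0" by simp
    with neg show ?thesis by (meson not_le)
  qed
  then obtain x where x: "\<And>j. x j \<in> carrier_vec n" "\<And>j. \<mu> (x j) < inverse (real (Suc j)) * s1 (x j)"
    by metis
  have pos: "s1 (x j) > 0" for j
  proof -
    have "0 \<le> \<mu> (x j)" using vn_nonneg[OF N x(1)] .
    with x(2)[of j] have "0 < inverse (real (Suc j)) * s1 (x j)" by linarith
    thus ?thesis by (simp add: zero_less_mult_iff)
  qed
  define y where "y j = complex_of_real (inverse (s1 (x j))) \<cdot>\<^sub>v x j" for j
  have yc: "y j \<in> carrier_vec n" for j unfolding y_def using x(1) by auto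
  have ys: "s1 (y j) = 1" for j unfolding y_def s1_smult using pos[of j]
    by (simp add: abs_of_pos norm_inverse)
  have ymu: "\<mu> (y j) < inverse (real (Suc j))" for j
  proof -
    have "\<mu> (y j) = inverse (s1 (x j)) * \<mu> (x j)" unfolding y_def
      using vn_smult[OF N x(1)] pos[of j] by (simp add: abs_of_pos norm_inverse)
    also have "\<dots> < inverse (s1 (x j)) * (inverse (real (Suc j)) * s1 (x j))"
      by (rule mult_strict_left_mono[OF x(2)], use pos[of j] in auto)
    also have "\<dots> = inverse (real (Suc j))" using pos[of j] by simp
    finally show ?thesis .
  qed
  from multi_BW[of y n, OF yc] ys obtain r where r: "strict_mono r"
    "\<forall>i<n. convergent (\<lambda>j. y (r j) $ i)" by auto
  define z where "z = vec n (\<lambda>i. lim (\<lambda>j. y (r j) $ i))"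
  have zc: "z \<in> carrier_vec n" unfolding z_def by auto
  have conv: "(\<lambda>j. y (r j) $ i) \<longlonglongrightarrow> z $ i" if "i < n" for i
    unfolding z_def using r(2) that convergent_LIMSEQ_iff by auto
  have d: "(\<lambda>j. s1 (y (r j) - z)) \<longlonglongrightarrow> 0"
  proof -
    have eq: "s1 (y (r j) - z) = (\<Sum>i<n. cmod (y (r j) $ i - z $ i))" for j
      unfolding s1_def using yc[of "r j"] zc by auto
    have "(\<lambda>j. \<Sum>i<n. cmod (y (r j) $ i - z $ i)) \<longlonglongrightarrow> (\<Sum>i<n. 0)"
    proof (rule tendsto_sum)
      fix i assume "i \<in> {..<n}"
      hence "(\<lambda>j. y (r j) $ i - z $ i) \<longlonglongrightarrow> 0" using conv[of i] by (simp add: LIM_zero)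
      thus "(\<lambda>j. cmod (y (r j) $ i - z $ i)) \<longlonglongrightarrow> 0" by (rule tendsto_norm_zero)
    qed
    thus ?thesis unfolding eq by simp
  qed
  obtain M where M: "\<forall>x\<in>carrier_vec n. \<mu> x \<le> M * s1 x" using norm_upper[OF N] by blast
  have bound: "\<mu> z \<le> inverse (real (Suc (r j))) + M * s1 (y (r j) - z)" for j
  proof -
    have eqz: "y (r j) + (z - y (r j)) = z" using yc[of "r j"] zc by auto
    have "\<mu> (y (r j) + (z - y (r j))) \<le> \<mu> (y (r j)) + \<mu> (z - y (r j))"
      by (rule vn_tri[OF N yc[of "r j"]], use zc yc[of "r j"] in auto)
    hence "\<mu> z \<le> \<mu> (y (r j)) + \<mu> (z - y (r j))" unfolding eqz .
    also have "\<mu> (z - y (r j)) \<le> M * s1 (z - y (r j))"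
      by (rule M[rule_format], use zc yc[of "r j"] in auto)
    also have "s1 (z - y (r j)) = s1 (y (r j) - z)" using yc[of "r j"] zc
      by (intro s1_minus_commute, auto)
    finally show ?thesis using ymu[of "r j"] by linarith
  qed
  have lim0: "(\<lambda>j. inverse (real (Suc (r j))) + M * s1 (y (r j) - z)) \<longlonglongrightarrow> 0 + M * 0"
  proof (intro tendsto_add tendsto_mult tendsto_const d)
    show "(\<lambda>j. inverse (real (Suc (r j)))) \<longlonglongrightarrow> 0"
      using LIMSEQ_subseq_LIMSEQ[OF LIMSEQ_inverse_real_of_nat r(1)] by (simp add: o_def)
  qed
  have "\<mu> z \<le> 0" by (rule LIMSEQ_le_const[OF lim0[simplified]], use bound in auto)
  with vn_nonneg[OF N zc] have "\<mu> z = 0" by auto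
  with vn_zero[OF N zc] have z0: "z = 0\<^sub>v n" by auto
  have "s1 (y (r j) - z) = 1" for j using z0 yc[of "r j"] ys[of "r j"] by simp
  with d have "(\<lambda>j. 1::real) \<longlonglongrightarrow> 0" by simp
  thus False using LIMSEQ_unique[OF tendsto_const] by fastforce
qed


lemma s1_mat_bound:
  assumes A: "A \<in> carrier_mat n n"
  shows "\<exists>K\<ge>0. \<forall>x\<in>carrier_vec n. s1 (A *\<^sub>v x) \<le> K * s1 x"
proof (intro exI conjI ballI)
  define K where "K = (\<Sum>i<n. \<Sum>j<n. cmod (A $$ (i,j)))"
  show "0 \<le> K" unfolding K_def by (intro sum_nonneg, auto)
  fix x :: "complex vec" assume x: "x \<in> carrier_vec n"
  have "s1 (A *\<^sub>v x) = (\<Sum>i<n. cmod (\<Sum>j<n. A $$ (i,j) * x $ j))"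
    unfolding s1_def using A x
    by (auto intro!: sum.cong simp: scalar_prod_def atLeast0LessThan)
  also have "\<dots> \<le> (\<Sum>i<n. \<Sum>j<n. cmod (A $$ (i,j)) * cmod (x $ j))"
    by (rule sum_mono, rule order_trans[OF norm_sum], simp add: norm_mult)
  also have "\<dots> \<le> (\<Sum>i<n. \<Sum>j<n. cmod (A $$ (i,j)) * s1 x)"
    by (intro sum_mono mult_left_mono, insert x, auto intro: s1_coord)
  also have "\<dots> = K * s1 x" unfolding K_def by (simp add: sum_distrib_right)
  finally show "s1 (A *\<^sub>v x) \<le> K * s1 x" .
qed

lemma ratio_bdd:
  assumes N: "is_vec_norm n \<mu>" and A: "A \<in> carrier_mat n n" and H: "H \<subseteq> carrier_vec n"
  shows "bdd_above {\<mu> (A *\<^sub>v x) / \<mu> x | x. x \<in> H \<and> x \<noteq> 0\<^sub>v (dim_vec x)}"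
proof -
  obtain M where M: "\<forall>x\<in>carrier_vec n. \<mu> x \<le> M * s1 x" using norm_upper[OF N] by blast
  obtain c where c: "c > 0" "\<forall>x\<in>carrier_vec n. c * s1 x \<le> \<mu> x" using norm_lower[OF N] by blast
  obtain K where K: "K \<ge> 0" "\<forall>x\<in>carrier_vec n. s1 (A *\<^sub>v x) \<le> K * s1 x" using s1_mat_bound[OF A] by blast
  show ?thesis unfolding bdd_above_def
  proof (intro exI ballI)
    fix r assume "r \<in> {\<mu> (A *\<^sub>v x) / \<mu> x | x. x \<in> H \<and> x \<noteq> 0\<^sub>v (dim_vec x)}"
    then obtain x where r: "r = \<mu> (A *\<^sub>v x) / \<mu> x" and xH: "x \<in> H" and x0: "x \<noteq> 0\<^sub>v (dim_vec x)" by auto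
    have x: "x \<in> carrier_vec n" using xH H by auto
    have mupos: "\<mu> x > 0" using vn_nonneg[OF N x] vn_zero[OF N x] x0 x by auto
    have Ax: "A *\<^sub>v x \<in> carrier_vec n" using A x by auto
    have "\<mu> (A *\<^sub>v x) \<le> \<bar>M\<bar> * s1 (A *\<^sub>v x)"
      using M Ax s1_nonneg[of "A *\<^sub>v x"] by (meson abs_ge_self mult_right_mono order_trans)
    also have "\<dots> \<le> \<bar>M\<bar> * (K * s1 x)" using K x by (intro mult_left_mono, auto)
    also have "\<dots> \<le> \<bar>M\<bar> * (K * (\<mu> x / c))"
    proof -
      have "s1 x \<le> \<mu> x / c" using c x by (simp add: field_simps mult.commute)
      thus ?thesis using K by (intro mult_left_mono, auto)
    qed
    also have "\<dots> = \<bar>M\<bar> * K / c * \<mu> x" by simp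
    finally have "\<mu> (A *\<^sub>v x) / \<mu> x \<le> \<bar>M\<bar> * K / c"
      using mupos by (simp add: pos_divide_le_eq)
    thus "r \<le> \<bar>M\<bar> * K / c" unfolding r .
  qed
qed


lemma subspace_carrier: "is_subspace n H \<Longrightarrow> H \<subseteq> carrier_vec n"
  unfolding is_subspace_def subspace_def submodule_def by (auto simp: module_vec_def)

lemma basis_exists:
  assumes H: "is_subspace n H"
  shows "\<exists>V d. basis_mat n H V d"
proof -
  interpret VS: vec_space "TYPE(complex)" n .
  have Hc: "H \<subseteq> carrier_vec n" using subspace_carrier[OF H] .
  have sub: "submodule class_ring H VS.V" using H unfolding is_subspace_def subspace_def by auto
  define P where "P T = (T \<subseteq> H \<and> VS.lin_indpt T)" for T
  have bnd: "P T \<Longrightarrow> finite T \<and> card T \<le> n" for T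
    unfolding P_def using VS.li_le_dim[OF VS.fin_dim] Hc VS.dim_is_n by auto
  have P0: "P {}" unfolding P_def VS.lin_dep_def by auto
  define m where "m = Max (card ` {T. P T})"
  have fin: "finite (card ` {T. P T})"
    by (rule finite_subset[of _ "{..n}"], use bnd in auto)
  have "m \<in> card ` {T. P T}" unfolding m_def by (rule Max_in[OF fin], use P0 in auto)
  then obtain T where PT: "P T" and cT: "card T = m" by auto
  have maxi: "P T' \<Longrightarrow> card T' \<le> m" for T' unfolding m_def by (rule Max_ge[OF fin], auto)
  have TH: "T \<subseteq> H" and li: "VS.lin_indpt T" using PT unfolding P_def by auto
  have finT: "finite T" using bnd[OF PT] by auto
  have spanT: "VS.span T = H"
  proof
    show "VS.span T \<subseteq> H" by (rule VS.span_is_subset[OF TH sub])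
    show "H \<subseteq> VS.span T"
    proof
      fix v assume vH: "v \<in> H"
      show "v \<in> VS.span T"
      proof (rule ccontr)
        assume nv: "v \<notin> VS.span T"
        have vT: "v \<notin> T" using nv VS.in_own_span[of T] TH Hc by auto
        have "\<not> VS.lin_dep (T \<union> {v})"
          using VS.lin_dep_iff_in_span[of T v] TH Hc li vH vT nv by auto
        hence "P (T \<union> {v})" unfolding P_def using TH vH by auto
        from maxi[OF this] have "card (T \<union> {v}) \<le> m" .
        moreover have "card (T \<union> {v}) = Suc m" using finT vT cT by simp
        ultimately show False by simp
      qed
    qed
  qed
  obtain xs where xs: "set xs = T" "distinct xs" using finite_distinct_list[OF finT] by blast
  define V where "V = mat_of_cols n xs"
  have xsc: "set xs \<subseteq> carrier_vec n" using xs TH Hc by auto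
  have cV: "cols V = xs" unfolding V_def by (rule cols_mat_of_cols[OF xsc])
  have "basis_mat n H V (length xs)"
    unfolding basis_mat_def cV using xs li spanT by (auto simp: V_def)
  thus ?thesis by blast
qed


lemma basis_mat_dim:
  assumes H: "is_subspace n H" and B: "basis_mat n H V d"
  shows "subspace_dim n H = d"
proof -
  interpret VS: vec_space "TYPE(complex)" n .
  have sub: "submodule class_ring H VS.V" using H unfolding is_subspace_def subspace_def by auto
  have vsH: "vectorspace class_ring (VS.V\<lparr>carrier := H\<rparr>)"
    using VS.subspace_is_vs H unfolding is_subspace_def by auto
  have V: "V \<in> carrier_mat n d" and dist: "distinct (cols V)" and li: "VS.lin_indpt (set (cols V))"
    and sp: "VS.span (set (cols V)) = H" using B unfolding basis_mat_def by auto
  have cc: "set (cols V) \<subseteq> carrier_vec n" using V cols_dim[of V] by (metis carrier_matD(1))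
  have cH: "set (cols V) \<subseteq> H" using VS.in_own_span[OF cc] sp by auto
  have "vectorspace.basis class_ring (VS.V\<lparr>carrier := H\<rparr>) (set (cols V))"
    unfolding vectorspace.basis_def[OF vsH]
    using VS.span_li_not_depend[OF cH sub] li sp cH by auto
  from vectorspace.dim_basis[OF vsH _ this] have "vectorspace.dim class_ring (VS.V\<lparr>carrier := H\<rparr>) = card (set (cols V))" by simp
  also have "\<dots> = d" using distinct_card[OF dist] V by auto
  finally show ?thesis unfolding subspace_dim_def by simp
qed

lemma restr_exists:
  assumes A: "A \<in> carrier_mat n n" and inv: "invariant_under A H" and B: "basis_mat n H V d"
  shows "\<exists>B. B \<in> carrier_mat d d \<and> A * V = V * B"
proof -
  interpret VS: vec_space "TYPE(complex)" n .
  have V: "V \<in> carrier_mat n d" and sp: "VS.span (set (cols V)) = H" using B unfolding basis_mat_def by auto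
  have cc: "set (cols V) \<subseteq> carrier_vec n" using V cols_dim[of V] by (metis carrier_matD(1))
  have cH: "set (cols V) \<subseteq> H" using VS.in_own_span[OF cc] sp by auto
  have ex: "\<exists>x. x \<in> carrier_vec d \<and> V *\<^sub>v x = A *\<^sub>v col V j" if j: "j < d" for j
  proof -
    have "col V j \<in> set (cols V)" using j V by (auto simp: cols_def)
    hence "A *\<^sub>v col V j \<in> H" using inv cH unfolding invariant_under_def by auto
    hence "A *\<^sub>v col V j \<in> VS.col_space V" unfolding VS.col_space_def sp .
    thus ?thesis unfolding VS.col_space_eq[OF V] using V by auto
  qed
  define xs where "xs = map (\<lambda>j. SOME x. x \<in> carrier_vec d \<and> V *\<^sub>v x = A *\<^sub>v col V j) [0..<d]"
  have xsj: "xs ! j \<in> carrier_vec d \<and> V *\<^sub>v (xs ! j) = A *\<^sub>v col V j" if "j < d" for j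
    unfolding xs_def using someI_ex[OF ex[OF that]] that by auto
  define Bm where "Bm = mat_of_cols d xs"
  have Bm: "Bm \<in> carrier_mat d d" unfolding Bm_def xs_def by auto
  have colB: "col Bm j = xs ! j" if "j < d" for j
    unfolding Bm_def using that xsj[OF that] by (auto simp: xs_def)
  have "A * V = V * Bm"
  proof (rule eq_matI)
    fix i j assume i: "i < dim_row (V * Bm)" and j: "j < dim_col (V * Bm)"
    have i': "i < n" and j': "j < d" using i j V Bm by auto
    have "(A * V) $$ (i,j) = col (A * V) j $ i" using A V i' j' by auto
    also have "col (A * V) j = A *\<^sub>v col V j" using col_mult2[OF A V j'] .
    also have "\<dots> = V *\<^sub>v col Bm j" using xsj[OF j'] colB[OF j'] by simp
    also have "\<dots> = col (V * Bm) j" using col_mult2[OF V Bm j'] by simp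
    also have "\<dots> $ i = (V * Bm) $$ (i,j)" using V Bm i' j' by auto
    finally show "(A * V) $$ (i,j) = (V * Bm) $$ (i,j)" .
  qed (use A V Bm in auto)
  thus ?thesis using Bm by blast
qed

lemma restr_props:
  assumes A: "A \<in> carrier_mat n n" and H: "is_subspace n H" and inv: "invariant_under A H"
  shows "\<exists>V d. basis_mat n H V d \<and> restr_mat A H \<in> carrier_mat d d \<and> A * V = V * restr_mat A H"
proof -
  obtain V d where B: "basis_mat n H V d" using basis_exists[OF H] by blast
  obtain Bm where "Bm \<in> carrier_mat d d \<and> A * V = V * Bm" using restr_exists[OF A inv B] by blast
  hence ex: "\<exists>Bm. \<exists>V d. basis_mat (dim_row A) H V d \<and> Bm \<in> carrier_mat d d \<and> A * V = V * Bm"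
    using B A by auto
  show ?thesis using someI_ex[OF ex] A unfolding restr_mat_def by auto
qed


lemma basis_extend:
  assumes B: "basis_mat n H V d"
  shows "d \<le> n \<and> (\<exists>W Wi. W \<in> carrier_mat n n \<and> Wi \<in> carrier_mat n n \<and> Wi * W = 1\<^sub>m n \<and> W * Wi = 1\<^sub>m n
     \<and> (\<forall>i<n. \<forall>j<d. W $$ (i,j) = V $$ (i,j)))"
proof -
  interpret VS: vec_space "TYPE(complex)" n .
  have V: "V \<in> carrier_mat n d" and dist: "distinct (cols V)" and li: "VS.lin_indpt (set (cols V))"
    using B unfolding basis_mat_def by auto
  have cc: "set (cols V) \<subseteq> carrier_vec n" using V cols_dim[of V] by (metis carrier_matD(1))
  define S where "S = set (cols V) \<union> set (unit_vecs n :: complex vec list)"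
  have Sc: "S \<subseteq> carrier_vec n" unfolding S_def using cc unit_vecs_carrier by auto
  define P where "P T = (T \<subseteq> S \<and> VS.lin_indpt T)" for T
  obtain Tm where Tm: "finite Tm" "maximal Tm P" "set (cols V) \<subseteq> Tm"
    using maximal_exists_superset[of S P "set (cols V)"] unfolding P_def S_def using li by auto
  have TmS: "Tm \<subseteq> S" and liT: "VS.lin_indpt Tm" using Tm(2) unfolding maximal_def P_def by auto
  have Tmc: "Tm \<subseteq> carrier_vec n" using TmS Sc by auto
  have uspan: "set (unit_vecs n :: complex vec list) \<subseteq> VS.span Tm"
  proof
    fix u assume u: "u \<in> set (unit_vecs n :: complex vec list)"
    show "u \<in> VS.span Tm"
    proof (rule ccontr)
      assume nu: "u \<notin> VS.span Tm"
      have uc: "u \<in> carrier_vec n" using u unit_vecs_carrier by auto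
      have uT: "u \<notin> Tm" using nu VS.in_own_span[OF Tmc] by auto
      have "\<not> VS.lin_dep (Tm \<union> {u})"
        using VS.lin_dep_iff_in_span[OF Tmc liT uc uT] nu by auto
      hence "P (Tm \<union> {u})" unfolding P_def using TmS u S_def by auto
      with Tm(2) have "Tm \<union> {u} = Tm" unfolding maximal_def by blast
      with uT show False by auto
    qed
  qed
  have "VS.span (set (unit_vecs n :: complex vec list)) \<subseteq> VS.span Tm"
    by (rule VS.span_is_subset[OF uspan VS.span_is_submodule[OF Tmc]])
  hence spT: "VS.span Tm = carrier_vec n" using VS.span_unit_vecs_is_carrier VS.span_closed[OF Tmc] by auto
  have "VS.basis Tm" unfolding VS.basis_def using liT spT Tmc by auto
  from VS.dim_basis[OF Tm(1) this] VS.dim_is_n have cardT: "card Tm = n" by simp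
  have cardV: "card (set (cols V)) = d" using distinct_card[OF dist] V by auto
  have dn: "d \<le> n" using card_mono[OF Tm(1) Tm(3)] cardT cardV by simp
  obtain us where us: "set us = Tm - set (cols V)" "distinct us"
    using finite_distinct_list[of "Tm - set (cols V)"] Tm(1) by blast
  define ws where "ws = cols V @ us"
  have ws_set: "set ws = Tm" unfolding ws_def using us Tm(3) by auto
  have ws_dist: "distinct ws" unfolding ws_def using us dist by auto
  have ws_len: "length ws = n" using distinct_card[OF ws_dist] ws_set cardT by simp
  have wsc: "set ws \<subseteq> carrier_vec n" using ws_set Tmc by simp
  define W where "W = mat_of_cols n ws"
  have W: "W \<in> carrier_mat n n" unfolding W_def using ws_len by auto
  have cW: "cols W = ws" unfolding W_def by (rule cols_mat_of_cols[OF wsc])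
  have "VS.rank W = n" using VS.lin_indpt_full_rank[OF W] cW ws_dist ws_set liT by auto
  hence "det W \<noteq> 0" using VS.det_rank_iff[OF W] by auto
  from det_non_zero_imp_unit[OF W this, unfolded Units_def, of "()"]
  obtain Wi where Wi: "Wi \<in> carrier_mat n n" and WiW: "Wi * W = 1\<^sub>m n" and WWi: "W * Wi = 1\<^sub>m n"
    by (auto simp: ring_mat_def)
  have idx: "W $$ (i,j) = V $$ (i,j)" if "i < n" "j < d" for i j
  proof -
    have "W $$ (i,j) = ws ! j $ i" unfolding W_def using that ws_len dn by (auto intro: mat_of_cols_index)
    also have "ws ! j = cols V ! j" unfolding ws_def using that V by (auto simp: nth_append)
    also have "\<dots> $ i = V $$ (i,j)" using that V by auto
    finally show ?thesis .
  qed
  show ?thesis using dn W Wi WiW WWi idx by blast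
qed


definition Emat :: "nat \<Rightarrow> nat \<Rightarrow> complex mat" where
  "Emat n d = mat n d (\<lambda>(i,j). if i = j then 1 else 0)"

lemma Emat_carrier[simp]: "Emat n d \<in> carrier_mat n d" unfolding Emat_def by auto

lemma mult_Emat:
  assumes M: "M \<in> carrier_mat r n" and dn: "d \<le> n" and i: "i < r" and j: "j < d"
  shows "(M * Emat n d) $$ (i,j) = M $$ (i,j)"
proof -
  have "(M * Emat n d) $$ (i,j) = (\<Sum>k\<in>{0..<n}. M $$ (i,k) * (if k = j then 1 else 0))"
    using M i j dn by (auto simp: Emat_def scalar_prod_def intro!: sum.cong)
  also have "\<dots> = (\<Sum>k\<in>{0..<n}. if k = j then M $$ (i,k) else 0)"
    by (rule sum.cong, auto)
  also have "\<dots> = M $$ (i,j)" using j dn by simp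
  finally show ?thesis .
qed

lemma Emat_mult:
  assumes B: "B \<in> carrier_mat d c" and dn: "d \<le> n" and i: "i < n" and j: "j < c"
  shows "(Emat n d * B) $$ (i,j) = (if i < d then B $$ (i,j) else 0)"
proof -
  have "(Emat n d * B) $$ (i,j) = (\<Sum>k\<in>{0..<d}. (if i = k then 1 else 0) * B $$ (k,j))"
    using B i j dn by (auto simp: Emat_def scalar_prod_def intro!: sum.cong)
  also have "\<dots> = (\<Sum>k\<in>{0..<d}. if k = i then B $$ (k,j) else 0)"
    by (rule sum.cong, auto)
  also have "\<dots> = (if i < d then B $$ (i,j) else 0)" by simp
  finally show ?thesis .
qed

lemma block_form:
  fixes A V B W Wi :: "complex mat"
  assumes A: "A \<in> carrier_mat n n" and V: "V \<in> carrier_mat n d" and B: "B \<in> carrier_mat d d"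
    and AV: "A * V = V * B" and dn: "d \<le> n"
    and W: "W \<in> carrier_mat n n" and Wi: "Wi \<in> carrier_mat n n" and WiW: "Wi * W = 1\<^sub>m n"
    and WV: "\<forall>i<n. \<forall>j<d. W $$ (i,j) = V $$ (i,j)"
  shows "\<exists>C D. C \<in> carrier_mat d (n-d) \<and> D \<in> carrier_mat (n-d) (n-d) \<and>
    Wi * A * W = four_block_mat B C (0\<^sub>m (n-d) d) D"
proof -
  define E where "E = Emat n d"
  have E: "E \<in> carrier_mat n d" unfolding E_def by simp
  have WE: "W * E = V"
  proof (rule eq_matI)
    fix i j assume "i < dim_row V" "j < dim_col V"
    hence i: "i < n" and j: "j < d" using V by auto
    show "(W * E) $$ (i,j) = V $$ (i,j)" unfolding E_def using mult_Emat[OF W dn i j] WV i j by simp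
  qed (use W V E in auto)
  define P where "P = Wi * A * W"
  have P: "P \<in> carrier_mat n n" unfolding P_def using Wi A W by auto
  have PE: "P * E = E * B"
  proof -
    have WiA: "Wi * A \<in> carrier_mat n n" using Wi A by auto
    have "P * E = (Wi * A) * (W * E)" unfolding P_def by (rule assoc_mult_mat[OF WiA W E])
    also have "\<dots> = (Wi * A) * V" unfolding WE ..
    also have "\<dots> = Wi * (A * V)" by (rule assoc_mult_mat[OF Wi A V])
    also have "\<dots> = Wi * (V * B)" unfolding AV ..
    also have "\<dots> = (Wi * V) * B" by (rule assoc_mult_mat[OF Wi V B, symmetric])
    also have "\<dots> = (Wi * (W * E)) * B" unfolding WE ..
    also have "\<dots> = ((Wi * W) * E) * B" using assoc_mult_mat[OF Wi W E] by simp
    also have "\<dots> = E * B" unfolding WiW using E B by simp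
    finally show ?thesis .
  qed
  have Pidx: "P $$ (i,j) = (if i < d then B $$ (i,j) else 0)" if i: "i < n" and j: "j < d" for i j
  proof -
    have "P $$ (i,j) = (P * E) $$ (i,j)" unfolding E_def using mult_Emat[OF P dn i j] by simp
    also have "\<dots> = (E * B) $$ (i,j)" unfolding PE ..
    also have "\<dots> = (if i < d then B $$ (i,j) else 0)" unfolding E_def using Emat_mult[OF B dn i j] .
    finally show ?thesis .
  qed
  define C where "C = mat d (n-d) (\<lambda>(i,j). P $$ (i, j + d))"
  define D where "D = mat (n-d) (n-d) (\<lambda>(i,j). P $$ (i + d, j + d))"
  have "P = four_block_mat B C (0\<^sub>m (n-d) d) D"
  proof (rule eq_matI)
    fix i j assume "i < dim_row (four_block_mat B C (0\<^sub>m (n-d) d) D)" "j < dim_col (four_block_mat B C (0\<^sub>m (n-d) d) D)"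
    hence i: "i < n" and j: "j < n" using B dn by (auto simp: D_def)
    show "P $$ (i,j) = four_block_mat B C (0\<^sub>m (n-d) d) D $$ (i,j)"
      using i j B dn Pidx[OF i] by (auto simp: C_def D_def)
  qed (use P B dn in \<open>auto simp: D_def\<close>)
  moreover have "C \<in> carrier_mat d (n-d)" "D \<in> carrier_mat (n-d) (n-d)" unfolding C_def D_def by auto
  ultimately show ?thesis unfolding P_def by blast
qed


lemma char_poly_block:
  fixes B C D :: "complex mat"
  assumes B: "B \<in> carrier_mat d d" and C: "C \<in> carrier_mat d m" and D: "D \<in> carrier_mat m m"
  shows "char_poly (four_block_mat B C (0\<^sub>m m d) D) = char_poly B * char_poly D"
proof -
  let ?cm = "\<lambda> A. [:0, 1:] \<cdot>\<^sub>m 1\<^sub>m (dim_row A) + map_mat (\<lambda>a. [:- a:]) A"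
  let ?C2 = "map_mat (\<lambda>a. [:- a:]) C"
  have "char_poly (four_block_mat B C (0\<^sub>m m d) D) = det (?cm (four_block_mat B C (0\<^sub>m m d) D))"
    unfolding char_poly_defs using B D by simp
  also have "?cm (four_block_mat B C (0\<^sub>m m d) D) = four_block_mat (?cm B) ?C2 (0\<^sub>m m d) (?cm D)"
    by (rule eq_matI, insert B C D, auto simp: one_poly_def)
  also have "det \<dots> = det (?cm B) * det (?cm D)"
    by (rule det_four_block_mat_lower_left_zero[of _ d _ m], insert B C D, auto)
  also have "\<dots> = char_poly B * char_poly D" unfolding char_poly_defs ..
  finally show ?thesis .
qed


lemma vec_first_app[simp]: "v \<in> carrier_vec n \<Longrightarrow> vec_first (v @\<^sub>v w) n = v"
  unfolding vec_first_def by (intro eq_vecI, auto)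
lemma vec_last_app[simp]: "v \<in> carrier_vec n \<Longrightarrow> w \<in> carrier_vec m \<Longrightarrow> vec_last (v @\<^sub>v w) m = w"
  unfolding vec_last_def by (intro eq_vecI, auto)

lemma kernel_fin_dim:
  fixes A :: "complex mat"
  assumes A: "A \<in> carrier_mat nr nc"
  shows "vectorspace.fin_dim class_ring ((cvs nc)\<lparr>carrier := mat_kernel A\<rparr>)"
proof -
  interpret K: kernel nr nc A by (unfold_locales, rule A)
  obtain Bs where "finite Bs" "K.basis Bs" using kernel_basis_exists[OF A] by blast
  thus ?thesis unfolding K.Ker.fin_dim_def K.Ker.basis_def by auto
qed

lemma subspace_dim_le:
  assumes "is_subspace n X" shows "subspace_dim n X \<le> n"
proof -
  obtain V d where B: "basis_mat n X V d" using basis_exists[OF assms] by blast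
  show ?thesis using basis_mat_dim[OF assms B] basis_extend[OF B] by simp
qed


lemma vec_last_add: "x \<in> carrier_vec (d+m) \<Longrightarrow> y \<in> carrier_vec (d+m) \<Longrightarrow> vec_last (x + y) m = vec_last x m + vec_last y m"
  unfolding vec_last_def by (intro eq_vecI, auto)
lemma vec_last_smult: "x \<in> carrier_vec (d+m) \<Longrightarrow> vec_last (a \<cdot>\<^sub>v x) m = a \<cdot>\<^sub>v vec_last x m"
  unfolding vec_last_def by (intro eq_vecI, auto)

lemma app0_add: fixes x y :: "complex vec" shows "x \<in> carrier_vec d \<Longrightarrow> y \<in> carrier_vec d \<Longrightarrow> (x + y) @\<^sub>v 0\<^sub>v m = (x @\<^sub>v 0\<^sub>v m) + (y @\<^sub>v 0\<^sub>v m)"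
  by (intro eq_vecI, auto)
lemma app0_smult: fixes x :: "complex vec" shows "x \<in> carrier_vec d \<Longrightarrow> (a \<cdot>\<^sub>v x) @\<^sub>v 0\<^sub>v m = a \<cdot>\<^sub>v (x @\<^sub>v 0\<^sub>v m)"
  by (intro eq_vecI, auto)
lemma vec_first_zero: "vec_first (0\<^sub>v (d+m)) d = 0\<^sub>v d"
  unfolding vec_first_def by (intro eq_vecI, auto)

lemma kernel_block:
  fixes B C D :: "complex mat"
  assumes B: "B \<in> carrier_mat d d" and C: "C \<in> carrier_mat d m" and D: "D \<in> carrier_mat m m"
  shows "kernel_dim (four_block_mat B C (0\<^sub>m m d) D) \<le> kernel_dim B + m"
proof -
  define T where "T = four_block_mat B C (0\<^sub>m m d) D"
  have T: "T \<in> carrier_mat (d+m) (d+m)" unfolding T_def using four_block_carrier_mat[OF B D] by simp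
  interpret KT: kernel "d+m" "d+m" T by (unfold_locales, rule T)
  interpret KB: kernel d d B by (unfold_locales, rule B)
  interpret VM: vec_space "TYPE(complex)" m .
  define f where "f x = vec_last x m" for x :: "complex vec"
  have hom: "f \<in> module_hom class_ring KT.VK VM.V"
    unfolding module_hom_def f_def
    using mat_kernel_carrier[OF T]
    by (auto simp: module_vec_def intro!: vec_last_add vec_last_smult)
  have lin: "linear_map class_ring KT.VK VM.V f"
    using hom KT.Ker.vectorspace_axioms vec_vs[of m]
    unfolding linear_map_def mod_hom_def mod_hom_axioms_def vectorspace_def by auto
  interpret L: linear_map class_ring KT.VK VM.V f by (rule lin)
  have fd: "KT.Ker.fin_dim" using kernel_fin_dim[OF T] by simp
  have rn: "vectorspace.dim class_ring (VM.V\<lparr>carrier := L.imT\<rparr>) + vectorspace.dim class_ring (KT.VK\<lparr>carrier := L.kerT\<rparr>) = KT.Ker.dim"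
    by (rule L.rank_nullity[OF fd])
  have "is_subspace m L.imT" unfolding is_subspace_def using L.imT_is_subspace .
  from subspace_dim_le[OF this] have im: "vectorspace.dim class_ring (VM.V\<lparr>carrier := L.imT\<rparr>) \<le> m"
    unfolding subspace_dim_def .
  have ker: "vectorspace.dim class_ring (KT.VK\<lparr>carrier := L.kerT\<rparr>) = KB.Ker.dim"
  proof -
    have vsK: "vectorspace class_ring (KT.VK\<lparr>carrier := L.kerT\<rparr>)"
      by (rule KT.Ker.subspace_is_vs[OF L.kerT_is_subspace])
    define g where "g y = y @\<^sub>v 0\<^sub>v m" for y :: "complex vec"
    have kerT: "L.kerT = {x. x \<in> mat_kernel T \<and> vec_last x m = 0\<^sub>v m}"
      unfolding L.ker_def f_def by (simp add: module_vec_def)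
    have gk: "g y \<in> L.kerT" if y: "y \<in> mat_kernel B" for y
    proof -
      interpret vardim "TYPE(complex)" .
      have yc: "y \<in> carrier_vec d" using y mat_kernel_carrier[OF B] by auto
      have "g y \<in> mat_kernel T" unfolding g_def T_def by (rule kernel_padr[OF y B C D])
      thus ?thesis unfolding kerT g_def using yc by auto
    qed
    have hom2: "g \<in> module_hom class_ring KB.VK (KT.VK\<lparr>carrier := L.kerT\<rparr>)"
      unfolding module_hom_def using gk mat_kernel_carrier[OF B]
      by (auto simp: module_vec_def g_def intro!: app0_add app0_smult)
    have lin2: "linear_map class_ring KB.VK (KT.VK\<lparr>carrier := L.kerT\<rparr>) g"
      using hom2 KB.Ker.vectorspace_axioms vsK
      unfolding linear_map_def mod_hom_def mod_hom_axioms_def vectorspace_def by auto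
    have fdB: "KB.Ker.fin_dim" using kernel_fin_dim[OF B] by simp
    have inj: "inj_on g (carrier KB.VK)"
    proof (rule inj_onI)
      fix x y assume x: "x \<in> carrier KB.VK" and y: "y \<in> carrier KB.VK" and e: "g x = g y"
      have xc: "x \<in> carrier_vec d" and yc: "y \<in> carrier_vec d" using x y mat_kernel_carrier[OF B] by auto
      from arg_cong[OF e, of "\<lambda>v. vec_first v d"] show "x = y" using xc yc by (simp add: g_def)
    qed
    have surj: "g ` carrier KB.VK = carrier (KT.VK\<lparr>carrier := L.kerT\<rparr>)"
    proof
      show "g ` carrier KB.VK \<subseteq> carrier (KT.VK\<lparr>carrier := L.kerT\<rparr>)" using gk by auto
      show "carrier (KT.VK\<lparr>carrier := L.kerT\<rparr>) \<subseteq> g ` carrier KB.VK"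
      proof
        fix x assume "x \<in> carrier (KT.VK\<lparr>carrier := L.kerT\<rparr>)"
        hence xk: "x \<in> mat_kernel T" and xl: "vec_last x m = 0\<^sub>v m" unfolding kerT by auto
        have xc: "x \<in> carrier_vec (d+m)" using xk mat_kernel_carrier[OF T] by auto
        define a where "a = vec_first x d"
        have ac: "a \<in> carrier_vec d" unfolding a_def by auto
        have xa: "x = a @\<^sub>v 0\<^sub>v m" using vec_first_last_append[OF xc] xl unfolding a_def by simp
        have "0\<^sub>v (d+m) = T *\<^sub>v x" using mat_kernelD[OF T xk] by simp
        also have "\<dots> = (B *\<^sub>v a + C *\<^sub>v 0\<^sub>v m) @\<^sub>v (0\<^sub>m m d *\<^sub>v a + D *\<^sub>v 0\<^sub>v m)"
          unfolding xa T_def by (rule four_block_mat_mult_vec[OF B C _ D ac], auto)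
        also have "B *\<^sub>v a + C *\<^sub>v 0\<^sub>v m = B *\<^sub>v a" using B C ac by auto
        finally have "vec_first (0\<^sub>v (d+m)) d = B *\<^sub>v a" using B ac by simp
        hence "B *\<^sub>v a = 0\<^sub>v d" unfolding vec_first_zero by simp
        hence "a \<in> mat_kernel B" using B ac by (intro mat_kernelI, auto)
        moreover have "x = g a" unfolding g_def xa ..
        ultimately show "x \<in> g ` carrier KB.VK" by auto
      qed
    qed
    from linear_map.dim_eq[OF lin2 fdB inj surj] show ?thesis by simp
  qed
  have "kernel_dim T = KT.Ker.dim" by simp
  also have "\<dots> \<le> KB.Ker.dim + m" using rn im ker by linarith
  finally show ?thesis unfolding T_def by simp
qed


lemma cm_eq: "X \<in> carrier_mat n n \<Longrightarrow> X - l \<cdot>\<^sub>m 1\<^sub>m n = char_matrix X (l::complex)"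
  unfolding char_matrix_def by (intro eq_matI, auto)

lemma geom_similar:
  assumes A: "A \<in> carrier_mat n n" and wit: "similar_mat_wit A P W Wi"
  shows "geom_mult A l = geom_mult P l"
proof -
  from similar_mat_witD2[OF A wit] have P: "P \<in> carrier_mat n n" by auto
  have cA: "char_matrix A l \<in> carrier_mat n n" using A unfolding char_matrix_def by auto
  have "geom_mult A l = kernel_dim (char_matrix A l)" unfolding geom_mult_def using cm_eq[OF A] A by simp
  also have "\<dots> = kernel.dim n (char_matrix A l)" unfolding kernel_dim_def using cA by simp
  also have "\<dots> = kernel.dim n (char_matrix P l)"
    by (rule similar_mat_wit_kernel_dim[OF cA similar_mat_wit_char_matrix[OF wit]])
  also have "\<dots> = kernel_dim (char_matrix P l)" unfolding kernel_dim_def using P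
    by (simp add: char_matrix_def)
  also have "\<dots> = geom_mult P l" unfolding geom_mult_def using cm_eq[OF P] P by simp
  finally show ?thesis .
qed

lemma block_minus:
  fixes B C D :: "complex mat"
  assumes B: "B \<in> carrier_mat d d" and C: "C \<in> carrier_mat d m" and D: "D \<in> carrier_mat m m"
  shows "four_block_mat B C (0\<^sub>m m d) D - l \<cdot>\<^sub>m 1\<^sub>m (d+m) =
    four_block_mat (B - l \<cdot>\<^sub>m 1\<^sub>m d) C (0\<^sub>m m d) (D - l \<cdot>\<^sub>m 1\<^sub>m m)"
  by (rule eq_matI, insert B C D, auto)


lemma noeig_alg:
  assumes B: "B \<in> carrier_mat d d" and ne: "\<not> eigenvalue B l"
  shows "alg_mult B l = 0"
  using ne eigenvalue_root_char_poly[OF B] order_root[of "char_poly B" l]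
  unfolding alg_mult_def by auto

lemma noeig_geom:
  assumes B: "B \<in> carrier_mat d d" and ne: "\<not> eigenvalue B l"
  shows "geom_mult B l = 0"
proof -
  let ?M = "char_matrix B l"
  have M: "?M \<in> carrier_mat d d" using B by simp
  interpret K: kernel d d ?M by (unfold_locales, rule M)
  have ker: "mat_kernel ?M = {0\<^sub>v d}"
  proof
    show "mat_kernel ?M \<subseteq> {0\<^sub>v d}"
    proof
      fix v assume v: "v \<in> mat_kernel ?M"
      from mat_kernelD[OF M v] have "v \<in> carrier_vec d" "?M *\<^sub>v v = 0\<^sub>v d" by auto
      with ne eigenvalue_char_matrix[OF B] show "v \<in> {0\<^sub>v d}" by auto
    qed
    show "{0\<^sub>v d} \<subseteq> mat_kernel ?M" using M by (auto intro: mat_kernelI)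
  qed
  have "\<not> K.Ker.lin_dep {}" unfolding module.lin_dep_def[OF K.Ker.module_axioms] by auto
  hence "K.Ker.basis {}" unfolding K.Ker.basis_def using K.Ker.span_empty ker
    by auto
  from K.Ker.dim_basis[OF _ this] have "K.dim = 0" by simp
  thus ?thesis unfolding geom_mult_def using cm_eq[OF B] B by simp
qed

lemma no_eigen:
  assumes A: "A \<in> carrier_mat n n" and Hs: "is_subspace n H" and bm: "basis_mat n H V d"
    and Bc: "B \<in> carrier_mat d d" and AV: "A * V = V * B" and N: "is_vec_norm n \<mu>"
    and lt: "cmod l > partial_norm \<mu> H A"
  shows "\<not> eigenvalue B l"
proof
  assume "eigenvalue B l"
  then obtain y where y: "y \<in> carrier_vec d" and y0: "y \<noteq> 0\<^sub>v d" and By: "B *\<^sub>v y = l \<cdot>\<^sub>v y"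
    unfolding eigenvalue_def eigenvector_def using Bc by auto
  interpret VS: vec_space "TYPE(complex)" n .
  have V: "V \<in> carrier_mat n d" and dist: "distinct (cols V)" and li: "VS.lin_indpt (set (cols V))"
    and sp: "VS.span (set (cols V)) = H" using bm unfolding basis_mat_def by auto
  define x where "x = V *\<^sub>v y"
  have xc: "x \<in> carrier_vec n" unfolding x_def using V y by auto
  have xH: "x \<in> H" using VS.col_space_eq[OF V] V y xc unfolding VS.col_space_def sp x_def by auto
  have x0: "x \<noteq> 0\<^sub>v n"
  proof
    assume "x = 0\<^sub>v n"
    hence "VS.lin_dep (set (cols V))" using VS.lin_depI[OF V y y0 _ dist] unfolding x_def by auto
    with li show False by simp
  qed
  have Ax: "A *\<^sub>v x = l \<cdot>\<^sub>v x"
  proof -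
    have "A *\<^sub>v x = (A * V) *\<^sub>v y" unfolding x_def using assoc_mult_mat_vec[OF A V y] by simp
    also have "\<dots> = V *\<^sub>v (B *\<^sub>v y)" unfolding AV using assoc_mult_mat_vec[OF V Bc y] by simp
    also have "\<dots> = l \<cdot>\<^sub>v x" unfolding By x_def using mult_mat_vec[OF V y] by simp
    finally show ?thesis .
  qed
  have mupos: "\<mu> x > 0" using vn_nonneg[OF N xc] vn_zero[OF N xc] x0 by auto
  have "\<mu> (A *\<^sub>v x) / \<mu> x = cmod l" unfolding Ax using vn_smult[OF N xc] mupos by simp
  hence mem: "cmod l \<in> {\<mu> (A *\<^sub>v x) / \<mu> x | x. x \<in> H \<and> x \<noteq> 0\<^sub>v (dim_vec x)}"
    using xH x0 xc by force
  have "cmod l \<le> partial_norm \<mu> H A" unfolding partial_norm_def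
    by (rule cSup_upper[OF mem ratio_bdd[OF N A subspace_carrier[OF Hs]]])
  with lt show False by simp
qed

theorem theorem5p1:
  fixes A :: "complex mat" and H :: "complex vec set" and n :: nat
  assumes A: "A \<in> carrier_mat n n"
    and H: "is_subspace n H"
    and inv: "invariant_under A H"
  shows "(\<forall>l::complex.
           alg_mult A l \<le> alg_mult (restr_mat A H) l + n - subspace_dim n H \<and>
           geom_mult A l \<le> geom_mult (restr_mat A H) l + n - subspace_dim n H) \<and>
         (\<forall>(\<mu> :: complex vec \<Rightarrow> real) (l::complex).
           is_vec_norm n \<mu> \<longrightarrow> cmod l > partial_norm \<mu> H A \<longrightarrow>
           alg_mult A l \<le> n - subspace_dim n H \<and> geom_mult A l \<le> n - subspace_dim n H)"
  proof -
  define B where "B = restr_mat A H"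
  obtain V d where bm: "basis_mat n H V d" and Bc: "B \<in> carrier_mat d d" and AV: "A * V = V * B"
    using restr_props[OF A H inv] unfolding B_def by blast
  have sd: "subspace_dim n H = d" by (rule basis_mat_dim[OF H bm])
  have V: "V \<in> carrier_mat n d" using bm unfolding basis_mat_def by auto
  from basis_extend[OF bm] obtain W Wi where dn: "d \<le> n" and W: "W \<in> carrier_mat n n"
    and Wi: "Wi \<in> carrier_mat n n" and WiW: "Wi * W = 1\<^sub>m n" and WWi: "W * Wi = 1\<^sub>m n"
    and WV: "\<forall>i<n. \<forall>j<d. W $$ (i,j) = V $$ (i,j)" by blast
  obtain C D where C: "C \<in> carrier_mat d (n-d)" and D: "D \<in> carrier_mat (n-d) (n-d)"
    and P: "Wi * A * W = four_block_mat B C (0\<^sub>m (n-d) d) D"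
    using block_form[OF A V Bc AV dn W Wi WiW WV] by blast
  define Pm where "Pm = Wi * A * W"
  have nd: "d + (n - d) = n" using dn by simp
  have Pc: "Pm \<in> carrier_mat n n" unfolding Pm_def using Wi A W by auto
  have APm: "A = W * Pm * Wi"
  proof -
    have WiA: "Wi * A \<in> carrier_mat n n" using Wi A by auto
    have e1: "W * (Wi * A) = (W * Wi) * A" using assoc_mult_mat[OF W Wi A] by simp
    have "W * Pm = (W * (Wi * A)) * W" unfolding Pm_def using assoc_mult_mat[OF W WiA W] by simp
    also have "\<dots> = A * W" unfolding e1 WWi using A by simp
    finally have "W * Pm * Wi = A * W * Wi" by simp
    also have "\<dots> = A * (W * Wi)" using assoc_mult_mat[OF A W Wi] by simp
    also have "\<dots> = A" unfolding WWi using A by simp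
    finally show ?thesis by simp
  qed
  have wit: "similar_mat_wit A Pm W Wi"
    unfolding similar_mat_wit_def Let_def using A Pc W Wi WWi WiW APm by auto
  have sim: "similar_mat A Pm" unfolding similar_mat_def using wit by blast
  have part1_alg: "alg_mult A l \<le> alg_mult B l + (n - d)" for l
  proof -
    have cpA: "char_poly A = char_poly B * char_poly D"
      using char_poly_similar[OF sim] char_poly_block[OF Bc C D] unfolding Pm_def P by simp
    have dB: "degree (char_poly B) = d" using degree_monic_char_poly[OF Bc] by simp
    have dD: "degree (char_poly D) = n - d" using degree_monic_char_poly[OF D] by simp
    have nzB: "char_poly B \<noteq> 0" using degree_monic_char_poly[OF Bc] by auto
    have nzD: "char_poly D \<noteq> 0" using degree_monic_char_poly[OF D] by auto
    have "alg_mult A l = Polynomial.order l (char_poly B) + Polynomial.order l (char_poly D)"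
      unfolding alg_mult_def cpA by (rule order_mult, use nzB nzD in simp)
    also have "Polynomial.order l (char_poly D) \<le> n - d" using order_degree[OF nzD] dD by simp
    finally show ?thesis unfolding alg_mult_def by simp
  qed
  have part1_geom: "geom_mult A l \<le> geom_mult B l + (n - d)" for l
  proof -
    have "geom_mult A l = geom_mult Pm l" by (rule geom_similar[OF A wit])
    also have "\<dots> = kernel_dim (four_block_mat (B - l \<cdot>\<^sub>m 1\<^sub>m d) C (0\<^sub>m (n-d) d) (D - l \<cdot>\<^sub>m 1\<^sub>m (n-d)))"
      unfolding geom_mult_def Pm_def P using block_minus[OF Bc C D, of l] Bc D nd by simp
    also have "\<dots> \<le> kernel_dim (B - l \<cdot>\<^sub>m 1\<^sub>m d) + (n - d)"
      by (rule kernel_block, use Bc C D in auto)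
    also have "kernel_dim (B - l \<cdot>\<^sub>m 1\<^sub>m d) = geom_mult B l" unfolding geom_mult_def using Bc by simp
    finally show ?thesis .
  qed
  show ?thesis
  proof (intro conjI allI impI)
    fix l
    show "alg_mult A l \<le> alg_mult (restr_mat A H) l + n - subspace_dim n H"
      using part1_alg[of l] dn unfolding sd B_def by simp
    show "geom_mult A l \<le> geom_mult (restr_mat A H) l + n - subspace_dim n H"
      using part1_geom[of l] dn unfolding sd B_def by simp
  next
    fix \<mu> l assume N: "is_vec_norm n \<mu>" and lt: "partial_norm \<mu> H A < cmod l"
    have ne: "\<not> eigenvalue B l" by (rule no_eigen[OF A H bm Bc AV N lt])
    show "alg_mult A l \<le> n - subspace_dim n H"
      using part1_alg[of l] noeig_alg[OF Bc ne] unfolding sd by simp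
    show "geom_mult A l \<le> n - subspace_dim n H"
      using part1_geom[of l] noeig_geom[OF Bc ne] unfolding sd by simp
  qed
qed

end
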